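(* Let $n\ge1$, $s\in(0,1)$. There exist $\gamma\in(0,1)$ and $C>0$, both independent of $u$, such that for every $r\in(0,1]$ and every measurable $u$ on $B_r$ with $e^u\in L^2(B_r)$, the functions $$\overline{v}(x,t):=C(n,s)\int_{B_r}\frac{e^{u(y)}}{(|x-y|^2+t^2)^{\frac{n-2s}{2}}}dy,\qquad v(x):=\overline{v}(x,0),$$ satisfy $$\|t^{\frac{1-2s}{2}}\overline{v}\|_{L^2(D_r)}+\|v\|_{L^2(B_r)}\leq C\|e^u\|_{L^1(B_r)}^{\gamma}\|e^u\|_{L^2(B_r)}^{1-\gamma}.$$
   Context: $C(n,s)>0$ is a fixed constant depending only on $n,s$ (chosen so that $-\lim_{t\to0}t^{1-2s}\partial_t\overline v=\kappa_se^u$ on $B_r$, $\kappa_s=\frac{\Gamma(1-s)}{2^{2s-1}\Gamma(s)}$). $B_r$ is the ball of radius $r$ centered at $0$ in $\mathbb{R}^n$, $D_r=B^{n+1}_r(0)\cap(\mathbb{R}^n\times[0,\infty))$ with $B^{n+1}_r(0)$ the ball in $\mathbb{R}^{n+1}$; points of $\mathbb{R}^{n+1}_+$ are written $(x,t)$. *)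

theory Defs
  imports "HOL-Analysis.Analysis"
begin

definition vbar :: "real \<Rightarrow> real \<Rightarrow> real \<Rightarrow> ('a::euclidean_space \<Rightarrow> real) \<Rightarrow> 'a \<times> real \<Rightarrow> ennreal" where
  "vbar c s r u p = ennreal c * (\<integral>\<^sup>+ y \<in> ball 0 r.
      ennreal (exp (u y) / ((norm (fst p - y))\<^sup>2 + (snd p)\<^sup>2) powr ((real DIM('a) - 2 * s) / 2)) \<partial>lborel)"

definition half_ball :: "real \<Rightarrow> ('a::euclidean_space \<times> real) set" where
  "half_ball r = {p. p \<in> ball 0 r \<and> snd p \<ge> 0}"

end

theory Submission
  imports Defs
begin

lemma nn_translate:
  fixes h :: "'a::euclidean_space \<Rightarrow> ennreal"
  assumes [measurable]: "h \<in> borel_measurable borel"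
  shows "(\<integral>\<^sup>+ x. h (x - a) \<partial>lborel) = (\<integral>\<^sup>+ x. h x \<partial>lborel)"
proof -
  have "(\<integral>\<^sup>+ x. h x \<partial>lborel) = (\<integral>\<^sup>+ x. h x \<partial>(distr lborel borel ((+) (-a))))"
    by (simp add: lborel_distr_plus)
  also have "\<dots> = (\<integral>\<^sup>+ x. h (-a + x) \<partial>lborel)"
    by (subst nn_integral_distr) auto
  finally show ?thesis by simp
qed

lemma shell_exists:
  fixes d \<rho> :: real
  assumes "0 < d" "d < \<rho>"
  shows "\<exists>k::nat. \<rho> / 2^(k+1) < d \<and> d \<le> \<rho> / 2^k"
proof -
  obtain m where m: "(1/2::real)^m < d / \<rho>"
    using real_arch_pow_inv[of "d/\<rho>" "1/2::real"] assms by auto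
  have "\<not> (\<rho> / 2^0 < d)" using assms by simp
  moreover have "\<exists>k. \<rho> / 2^k < d"
    using m assms by (intro exI[of _ m]) (simp add: field_simps power_divide)
  ultimately obtain k where "\<not> (\<rho> / 2^k < d)" "\<rho> / 2^(Suc k) < d"
    using exists_least_lemma[of "\<lambda>k. \<rho> / 2^k < d"] by blast
  then show ?thesis by (intro exI[of _ k]) auto
qed


lemma dy_alg:
  fixes \<rho> b :: real and n k :: nat
  assumes "0 < \<rho>"
  shows "(\<rho> / 2^(k+1)) powr (-b) * (\<rho> / 2^k)^n
     = 2 powr b * \<rho> powr (real n - b) * (2 powr (b - real n))^k"
proof -
  have p: "(2::real)^m = 2 powr (real m)" for m by (simp add: powr_realpow)
  have "(\<rho> / 2^(k+1)) powr (-b) = \<rho> powr (-b) / (2 powr (real (k+1))) powr (-b)"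
    using assms by (simp only: p powr_divide)
  also have "\<dots> = \<rho> powr (-b) * 2 powr (b + b * k)"
    by (simp add: powr_powr powr_minus_divide algebra_simps)
  finally have a: "(\<rho> / 2^(k+1)) powr (-b) = \<rho> powr (-b) * 2 powr (b + b * k)" .
  have "(\<rho> / 2^k)^n = \<rho> ^ n / (2 powr k) ^ n"
    by (simp add: power_divide p)
  also have "\<dots> = \<rho> powr n * 2 powr (- (n * k))"
    using assms by (simp add: powr_realpow[symmetric] powr_powr powr_minus_divide mult.commute
         flip: powr_realpow)
  finally have b2: "(\<rho> / 2^k)^n = \<rho> powr n * 2 powr (- (n * k))" .
  have c: "(2 powr (b - real n))^k = 2 powr ((b - n) * k)"
    by (simp add: powr_realpow[symmetric] powr_powr flip: powr_realpow)
  have e1: "\<rho> powr (real n - b) = \<rho> powr (-b) * \<rho> powr n" by (simp flip: powr_add)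
  have e2: "(2::real) powr (b + b * k) * 2 powr (- (n * k)) = 2 powr b * 2 powr ((b - n) * k)"
    by (simp add: algebra_simps flip: powr_add)
  show ?thesis unfolding a b2 c e1 using e2
    by (simp add: algebra_simps)
qed


lemma riesz_ball:
  fixes \<rho> M b :: real
  assumes "0 < \<rho>" "0 \<le> M" "0 < b" "b < real DIM('a::euclidean_space)"
  shows "(\<integral>\<^sup>+ z. ennreal (indicator (ball (0::'a) \<rho>) z * (M * norm z powr (-b))) \<partial>lborel)
     \<le> ennreal (M * unit_ball_vol DIM('a) * 2 powr b / (1 - 2 powr (b - DIM('a))) * \<rho> powr (DIM('a) - b))"
proof -
  define n where "n = DIM('a)"
  define V where "V = unit_ball_vol n"
  define q where "q = (2::real) powr (b - n)"
  define S where "S k = {z::'a. \<rho> / 2^(k+1) < norm z \<and> norm z \<le> \<rho> / 2^k}" for k :: nat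
  define c where "c k = M * (\<rho> / 2^(k+1)) powr (-b)" for k :: nat
  have V: "V > 0" unfolding V_def by simp
  have q: "0 < q" "q < 1" using assms unfolding q_def n_def
    using powr_less_mono[of "b - real DIM('a)" 0 2] by auto
  have Smeas[measurable]: "S k \<in> sets lborel" for k unfolding S_def by measurable
  have c0: "0 \<le> c k" for k using assms by (simp add: c_def)
  have pw: "ennreal (indicator (ball (0::'a) \<rho>) z * (M * norm z powr (-b)))
      \<le> (\<Sum>k. ennreal (c k) * indicator (S k) z)" for z
  proof (cases "z \<in> ball 0 \<rho> \<and> z \<noteq> 0")
    case True
    then obtain k where k: "\<rho> / 2^(k+1) < norm z" "norm z \<le> \<rho> / 2^k"
      using shell_exists[of "norm z" \<rho>] by auto
    have "norm z powr (-b) \<le> (\<rho> / 2^(k+1)) powr (-b)"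
      using k assms by (intro powr_mono2') auto
    then have "indicator (ball (0::'a) \<rho>) z * (M * norm z powr (-b)) \<le> c k"
      using True assms unfolding c_def by (auto intro!: mult_left_mono)
    then have "ennreal (indicator (ball (0::'a) \<rho>) z * (M * norm z powr (-b))) \<le> ennreal (c k) * indicator (S k) z"
      using k by (simp add: S_def ennreal_leI)
    also have "\<dots> \<le> (\<Sum>k. ennreal (c k) * indicator (S k) z)"
      using sum_le_suminf[OF summableI, of "{k}" "\<lambda>k. ennreal (c k) * indicator (S k) z"] by (simp only: sum.insert finite.emptyI empty_iff not_False_eq_True sum.empty add_0_right) (meson finite.emptyI finite.insertI zero_le)
    finally show ?thesis .
  next
    case False
    then show ?thesis by (auto simp: indicator_def)
  qed
  have "(\<integral>\<^sup>+ z. ennreal (indicator (ball (0::'a) \<rho>) z * (M * norm z powr (-b))) \<partial>lborel)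
      \<le> (\<integral>\<^sup>+ z. (\<Sum>k. ennreal (c k) * indicator (S k) z) \<partial>lborel)"
    by (intro nn_integral_mono pw)
  also have "\<dots> = (\<Sum>k. \<integral>\<^sup>+ z. ennreal (c k) * indicator (S k) z \<partial>lborel)"
    by (intro nn_integral_suminf) measurable
  also have "\<dots> = (\<Sum>k. ennreal (c k) * emeasure lborel (S k))"
    by (intro suminf_cong nn_integral_cmult_indicator) (use Smeas in simp)
  also have "\<dots> \<le> (\<Sum>k. ennreal (c k) * ennreal (V * (\<rho> / 2^k) ^ n))"
  proof (intro suminf_le summableI mult_left_mono)
    fix k
    have "emeasure lborel (S k) \<le> emeasure lborel (cball (0::'a) (\<rho> / 2^k))"
      by (intro emeasure_mono) (auto simp: S_def)
    also have "\<dots> = ennreal (V * (\<rho> / 2^k) ^ n)"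
      using assms by (simp add: emeasure_cball V_def n_def)
    finally show "emeasure lborel (S k) \<le> ennreal (V * (\<rho> / 2^k) ^ n)" .
  qed auto
  also have "\<dots> = (\<Sum>k. ennreal (M * V * 2 powr b * \<rho> powr (real n - b) * q ^ k))"
  proof -
    have h: "c k * (V * (\<rho> / 2^k) ^ n) = M * V * 2 powr b * \<rho> powr (real n - b) * q ^ k" for k
      using dy_alg[OF assms(1), where b=b and k=k and n=n] unfolding c_def q_def
      by (simp add: algebra_simps)
    have "ennreal (c k) * ennreal (V * (\<rho> / 2^k) ^ n) = ennreal (M * V * 2 powr b * \<rho> powr (real n - b) * q ^ k)" for k
      using c0[of k] V assms by (subst h[symmetric]) (simp add: ennreal_mult)
    then show ?thesis by simp
  qed
  also have "\<dots> = ennreal (M * V * 2 powr b * \<rho> powr (real n - b) * (1 / (1 - q)))"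
  proof (rule suminf_ennreal_eq)
    show "(\<lambda>k. M * V * 2 powr b * \<rho> powr (real n - b) * q ^ k) sums (M * V * 2 powr b * \<rho> powr (real n - b) * (1 / (1 - q)))"
      using q by (intro sums_mult geometric_sums) auto
  qed (use assms V q in auto)
  finally show ?thesis
    by (simp add: n_def V_def q_def field_simps)
qed


lemma amgm_enn:
  fixes a b :: real assumes "0 \<le> a" "0 \<le> b"
  shows "ennreal a * ennreal b \<le> ennreal (a^2 / 2) + ennreal (b^2 / 2)"
proof -
  have "ennreal a * ennreal b = ennreal (a * b)" using assms by (simp add: ennreal_mult)
  also have "\<dots> \<le> ennreal (a^2 / 2 + b^2 / 2)"
    using sum_squares_bound[of a b] by (intro ennreal_leI) simp
  also have "\<dots> = ennreal (a^2 / 2) + ennreal (b^2 / 2)" by (rule ennreal_plus) auto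
  finally show ?thesis .
qed

lemma half_enn: fixes a :: real assumes "0 \<le> a" shows "ennreal a = 2 * ennreal (a / 2)"
proof -
  have "ennreal (2 * (a/2)) = ennreal 2 * ennreal (a/2)" by (rule ennreal_mult) (use assms in auto)
  then show ?thesis by simp
qed

lemma schur:
  fixes e :: "'a::euclidean_space \<Rightarrow> real" and G :: "'a \<Rightarrow> ennreal"
  assumes em[measurable]: "e \<in> borel_measurable borel" and Gm[measurable]: "G \<in> borel_measurable borel"
    and Gs: "\<And>z. G (-z) = G z" and e0: "\<And>y. 0 \<le> e y"
  shows "(\<integral>\<^sup>+x. (\<integral>\<^sup>+y. ennreal (e y) * G (x - y) \<partial>lborel)^2 \<partial>lborel)
     \<le> (\<integral>\<^sup>+z. G z \<partial>lborel)^2 * (\<integral>\<^sup>+ y. ennreal ((e y)^2) \<partial>lborel)"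
proof -
  define I where "I = (\<integral>\<^sup>+z. G z \<partial>lborel)"
  have tr: "(\<integral>\<^sup>+y. G (x - y) \<partial>lborel) = I" for x
  proof -
    have "(\<integral>\<^sup>+y. G (x - y) \<partial>lborel) = (\<integral>\<^sup>+y. G (y - x) \<partial>lborel)"
      using Gs[of "y - x" for y] by (simp add: minus_diff_eq)
    also have "\<dots> = I" unfolding I_def by (rule nn_translate) simp
    finally show ?thesis .
  qed
  have tr2: "(\<integral>\<^sup>+x. G (x - z) \<partial>lborel) = I" for z
    unfolding I_def by (rule nn_translate) simp
  define P where "P x = (\<integral>\<^sup>+z. G (x - z) * ennreal ((e z)^2 / 2) \<partial>lborel)" for x
  have pt: "(\<integral>\<^sup>+y. ennreal (e y) * G (x - y) \<partial>lborel)^2 \<le> I * (2 * P x)" for x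
  proof -
    have "(\<integral>\<^sup>+y. ennreal (e y) * G (x - y) \<partial>lborel)^2
        = (\<integral>\<^sup>+y. (\<integral>\<^sup>+z. (ennreal (e y) * G (x - y)) * (ennreal (e z) * G (x - z)) \<partial>lborel) \<partial>lborel)"
      by (simp add: power2_eq_square nn_integral_cmult nn_integral_multc)
    also have "\<dots> \<le> (\<integral>\<^sup>+y. (\<integral>\<^sup>+z. G (x - y) * ennreal ((e y)^2 / 2) * G (x - z)
                 + G (x - y) * (G (x - z) * ennreal ((e z)^2 / 2)) \<partial>lborel) \<partial>lborel)"
    proof (intro nn_integral_mono)
      fix y z
      have h: "ennreal (e y) * ennreal (e z) \<le> ennreal ((e y)^2 / 2) + ennreal ((e z)^2 / 2)"
        by (rule amgm_enn[OF e0 e0])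
      have "ennreal (e y) * G (x - y) * (ennreal (e z) * G (x - z))
          = (G (x - y) * G (x - z)) * (ennreal (e y) * ennreal (e z))" by (simp add: ac_simps)
      also have "\<dots> \<le> (G (x - y) * G (x - z)) * (ennreal ((e y)^2 / 2) + ennreal ((e z)^2 / 2))"
        by (rule mult_left_mono[OF h]) simp
      finally show "ennreal (e y) * G (x - y) * (ennreal (e z) * G (x - z))
        \<le> G (x - y) * ennreal ((e y)\<^sup>2 / 2) * G (x - z) + G (x - y) * (G (x - z) * ennreal ((e z)\<^sup>2 / 2))"
        by (simp only: ac_simps distrib_left)
    qed
    also have "\<dots> = (\<integral>\<^sup>+y. G (x - y) * ennreal ((e y)^2 / 2) * I + G (x - y) * P x \<partial>lborel)"
      by (simp add: nn_integral_add nn_integral_cmult tr P_def)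
    also have "\<dots> = P x * I + I * P x"
      by (simp add: nn_integral_add nn_integral_multc nn_integral_cmult tr P_def mult.commute)
    finally show ?thesis by (simp only: mult_2 distrib_left mult.commute[of "P x" I])
  qed
  have "(\<integral>\<^sup>+x. (\<integral>\<^sup>+y. ennreal (e y) * G (x - y) \<partial>lborel)^2 \<partial>lborel) \<le> (\<integral>\<^sup>+x. I * (2 * P x) \<partial>lborel)"
    by (intro nn_integral_mono pt)
  also have "\<dots> = I * (2 * (\<integral>\<^sup>+x. P x \<partial>lborel))"
    by (simp add: nn_integral_cmult P_def)
  also have "(\<integral>\<^sup>+x. P x \<partial>lborel) = (\<integral>\<^sup>+z. (\<integral>\<^sup>+x. G (x - z) * ennreal ((e z)^2 / 2) \<partial>lborel) \<partial>lborel)"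
    unfolding P_def by (rule lborel_pair.Fubini'[symmetric]) measurable
  also have "\<dots> = (\<integral>\<^sup>+z. I * ennreal ((e z)^2 / 2) \<partial>lborel)"
    by (simp add: nn_integral_multc tr2)
  also have "2 * \<dots> = I * (\<integral>\<^sup>+z. ennreal ((e z)^2) \<partial>lborel)"
  proof -
    have "(\<integral>\<^sup>+z. ennreal ((e z)^2) \<partial>lborel) = (\<integral>\<^sup>+z. 2 * ennreal ((e z)^2 / 2) \<partial>lborel)"
      by (intro nn_integral_cong half_enn) simp
    also have "\<dots> = 2 * (\<integral>\<^sup>+z. ennreal ((e z)^2 / 2) \<partial>lborel)"
      by (rule nn_integral_cmult) simp
    finally show ?thesis by (simp add: nn_integral_cmult ac_simps)
  qed
  finally show ?thesis by (simp add: I_def power2_eq_square mult.assoc)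
qed


lemma sq_le_enn: fixes a b :: ennreal shows "(a + b)^2 \<le> 2 * a^2 + 2 * b^2"
proof (cases "a = \<infinity> \<or> b = \<infinity>")
  case True then show ?thesis by (auto simp: power2_eq_square)
next
  case False
  then obtain x y where xy: "a = ennreal x" "b = ennreal y" "0 \<le> x" "0 \<le> y"
    using less_top_ennreal[of a] less_top_ennreal[of b] by (auto simp: top.not_eq_extremum)
  have "(x + y)^2 \<le> 2 * x^2 + 2 * y^2" using sum_squares_bound[of x y] by (simp add: power2_sum)
  then have "ennreal ((x + y)^2) \<le> ennreal (2 * x^2 + 2 * y^2)" by (rule ennreal_leI)
  also have "ennreal (2 * x^2 + 2 * y^2) = ennreal (2 * x^2) + ennreal (2 * y^2)"
    by (rule ennreal_plus) auto
  also have "\<dots> = 2 * ennreal (x^2) + 2 * ennreal (y^2)"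
    using ennreal_mult[of 2 "x^2"] ennreal_mult[of 2 "y^2"] by simp
  finally have "ennreal ((x + y)^2) \<le> 2 * ennreal (x^2) + 2 * ennreal (y^2)" .
  moreover have "ennreal ((x + y)^2) = (ennreal x + ennreal y)^2"
  proof -
    have "ennreal ((x + y)^2) = ennreal (x + y)^2" by (rule ennreal_power[symmetric]) (use xy in auto)
    also have "ennreal (x + y) = ennreal x + ennreal y" by (rule ennreal_plus) (use xy in auto)
    finally show ?thesis .
  qed
  ultimately show ?thesis using xy by (simp add: ennreal_power)
qed

lemma alg_powr:
  fixes N1 N2 n s :: real
  assumes "0 < N1" "0 < N2" "0 < n"
  shows "((N1/N2) powr (1/n)) powr s * N2 = N1 powr (s/n) * N2 powr (1 - s/n)"
    and "((N1/N2) powr (1/n)) powr (-(n - s)) * N1 = N1 powr (s/n) * N2 powr (1 - s/n)"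
proof -
  have "((N1/N2) powr (1/n)) powr s * N2 = (N1 powr (s/n) / N2 powr (s/n)) * N2 powr 1"
    using assms by (simp add: powr_powr powr_divide)
  also have "\<dots> = N1 powr (s/n) * N2 powr (1 - s/n)"
    using assms by (simp add: powr_diff)
  finally show "((N1/N2) powr (1/n)) powr s * N2 = N1 powr (s/n) * N2 powr (1 - s/n)" .
  have "((N1/N2) powr (1/n)) powr (-(n - s)) * N1 = (N1 powr (s/n - 1) / N2 powr (s/n - 1)) * N1 powr 1"
    using assms by (simp add: powr_powr powr_divide diff_divide_distrib)
  also have "\<dots> = N1 powr (s/n - 1 + 1) * N2 powr (-(s/n - 1))"
    using assms by (simp only: powr_add powr_minus_divide powr_one) (simp add: divide_inverse powr_minus)
  also have "\<dots> = N1 powr (s/n) * N2 powr (1 - s/n)" by simp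
  finally show "((N1/N2) powr (1/n)) powr (-(n - s)) * N1 = N1 powr (s/n) * N2 powr (1 - s/n)" .
qed

lemma kern_bound:
  fixes d t s n :: real
  assumes "0 < d" "d < 2" "0 \<le> t" "t \<le> 1" "1 \<le> n" "0 < s" "s < 1"
  shows "1 / (d^2 + t^2) powr ((n - 2 * s)/2) \<le> 5 * 2 powr n * d powr (-(n - s))"
proof -
  have "d^2 \<le> 2^2" using assms by (intro power_mono) auto
  then have f1: "d^2 \<le> 4" by simp
  have f2: "t^2 \<le> 1" using assms by (intro power_le_one) auto
  have f3: "0 < d^2" using assms by simp
  have f4: "0 \<le> t^2" by simp
  have q01: "d^2 \<le> d^2 + t^2" using f4 by linarith
  have q02: "d^2 + t^2 \<le> 5" using f1 f2 by linarith
  have q03: "0 < d^2 + t^2" using f3 f4 by linarith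
  note q0 = q01 q02 q03
  have db: "d powr (-(n - s)) \<ge> 2 powr (-(n - s))"
    using assms by (intro powr_mono2') auto
  have "2 powr (-(n - s)) \<ge> 2 powr (-n)" using assms by (intro powr_mono) auto
  then have "d powr (-(n - s)) \<ge> 2 powr (-n)" using db by linarith
  then have "2 powr n * d powr (-(n - s)) \<ge> 2 powr n * 2 powr (-n)"
    by (intro mult_left_mono) auto
  moreover have "(2::real) powr n * 2 powr (-n) = 1" by (simp flip: powr_add)
  ultimately have db2: "2 powr n * d powr (-(n - s)) \<ge> 1" by simp
  show ?thesis
  proof (cases "n - 2 * s \<ge> 0")
    case True
    have "(d^2) powr ((n - 2 * s)/2) \<le> (d^2 + t^2) powr ((n - 2 * s)/2)"
      using q0 True by (intro powr_mono2) auto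
    moreover have "(d^2) powr ((n - 2 * s)/2) = d powr (n - 2 * s)"
    proof -
      have "d^2 = d powr 2" using assms powr_realpow[of d 2] by simp
      moreover have "2 * ((n - 2 * s)/2) = n - 2 * s" by simp
      ultimately show ?thesis by (simp only: powr_powr)
    qed
    ultimately have "1 / (d^2 + t^2) powr ((n - 2 * s)/2) \<le> 1 / d powr (n - 2 * s)"
      using assms by (intro divide_left_mono) auto
    also have "\<dots> = d powr s * d powr (-(n - s))"
      using assms by (simp add: powr_minus_divide flip: powr_add powr_diff) (simp add: powr_diff powr_minus_divide)
    also have "\<dots> \<le> 2 * d powr (-(n - s))"
    proof -
      have "d powr s \<le> 2 powr 1" using assms
        by (intro order_trans[OF powr_mono2[of s d 2]] powr_mono) auto
      then show ?thesis by (intro mult_right_mono) auto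
    qed
    also have "\<dots> \<le> 5 * 2 powr n * d powr (-(n - s))"
    proof -
      have "(2::real) powr 1 \<le> 2 powr n" using assms by (intro powr_mono) auto
      then have "2 \<le> 5 * 2 powr n" by simp
      then show ?thesis by (intro mult_right_mono) auto
    qed
    finally show ?thesis .
  next
    case False
    have "1 / (d^2 + t^2) powr ((n - 2 * s)/2) = (d^2 + t^2) powr ((2 * s - n)/2)"
      using q0 by (simp add: powr_minus_divide[symmetric] minus_divide_left)
    also have "\<dots> \<le> 5 powr ((2 * s - n)/2)"
      using q0 False by (intro powr_mono2) auto
    also have "\<dots> \<le> 5 powr 1" using False assms by (intro powr_mono) auto
    also have "\<dots> \<le> 5 * 2 powr n * d powr (-(n - s))"
      using db2 by simp
    finally show ?thesis .
  qed
qed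


lemma enn_combine:
  fixes a c d f v :: real
  assumes "0 \<le> a" "0 \<le> c" "0 \<le> d" "0 \<le> f" "0 \<le> v"
  shows "2 * (ennreal a)^2 * ennreal c + 2 * (ennreal d * ennreal f)^2 * ennreal v
       = ennreal (2 * a^2 * c + 2 * (d * f)^2 * v)"
  using assms
  by (simp add: ennreal_mult ennreal_power[symmetric] mult.assoc)

lemma main_est:
  fixes e :: "'a::euclidean_space \<Rightarrow> real" and r s N1 N2sq b M V K :: real
  assumes b_def: "b = real DIM('a) - s" and M_def: "M = 5 * 2 powr real DIM('a)"
    and V_def: "V = unit_ball_vol DIM('a)"
    and K_def: "K = M * unit_ball_vol DIM('a) * 2 powr b / (1 - 2 powr (b - DIM('a)))"
    and em[measurable]: "e \<in> borel_measurable borel" and e0: "\<And>y. 0 \<le> e y"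
    and r: "0 < r" "r \<le> 1" and s: "0 < s" "s < 1"
    and N1: "(\<integral>\<^sup>+y. ennreal (e y) \<partial>lborel) = ennreal N1" "0 < N1"
    and N2: "(\<integral>\<^sup>+y. ennreal ((e y)^2) \<partial>lborel) = ennreal N2sq" "0 < N2sq"
  shows "(\<integral>\<^sup>+x. indicator (ball 0 r) x * (\<integral>\<^sup>+y. ennreal (e y) * ennreal (M * norm (x - y) powr (-b)) \<partial>lborel)^2 \<partial>lborel)
     \<le> ennreal ((2 * K^2 + 2 * M^2 * V) * (N1 powr (s / DIM('a)) * (sqrt N2sq) powr (1 - s / DIM('a)))^2)"
proof -
  define n where "n = real DIM('a)"
  have n1: "1 \<le> n" unfolding n_def by (simp add: DIM_positive Suc_le_eq)
  have b: "0 < b" "b < n" using s n1 unfolding b_def n_def by linarith+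
  have M0: "0 < M" unfolding M_def by simp
  have V0: "0 < V" unfolding V_def by simp
  have K0: "0 \<le> K"
  proof -
    have "(2::real) powr (b - n) < 2 powr 0" using b by (intro powr_less_mono) auto
    then show ?thesis unfolding K_def n_def using M0 by (simp add: n_def)
  qed
  define N2 where "N2 = sqrt N2sq"
  have N2p: "0 < N2" "N2^2 = N2sq" using N2 unfolding N2_def by auto
  define Q0 where "Q0 = N1 powr (s / n) * N2 powr (1 - s / n)"
  define \<delta> where "\<delta> = (N1 / N2) powr (1 / n)"
  have \<delta>0: "0 < \<delta>" using N1 N2p unfolding \<delta>_def by simp
  define G where "G z = ennreal (M * norm z powr (-b))" for z :: 'a
  define Gn where "Gn z = ennreal (indicator (ball 0 \<delta>) z * (M * norm z powr (-b)))" for z :: 'a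
  define F where "F = M * \<delta> powr (-b)"
  have F0: "0 \<le> F" using M0 by (simp add: F_def)
  have [measurable]: "ball (0::'a) \<delta> \<in> sets borel" by simp
  have pm[measurable]: "(\<lambda>x::'a. M * norm x powr (-b)) \<in> borel_measurable borel"
    by (intro borel_measurable_times powr_real_measurable borel_measurable_norm borel_measurable_const measurable_ident_sets)
  have Gm[measurable]: "G \<in> borel_measurable borel" unfolding G_def by measurable
  have Gnm[measurable]: "Gn \<in> borel_measurable borel" unfolding Gn_def by measurable
  have pwG: "G z \<le> Gn z + ennreal F" for z
  proof (cases "norm z < \<delta>")
    case True then show ?thesis by (simp add: G_def Gn_def)
  next
    case False
    then have "M * norm z powr (-b) \<le> F"
      unfolding F_def using \<delta>0 b M0 by (intro mult_left_mono powr_mono2') auto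
    then have "G z \<le> ennreal F" unfolding G_def by (rule ennreal_leI)
    moreover have "ennreal F \<le> Gn z + ennreal F" by simp
    ultimately show ?thesis by (rule order_trans)
  qed
  define w where "w x = (\<integral>\<^sup>+y. ennreal (e y) * G (x - y) \<partial>lborel)" for x
  define wn where "wn x = (\<integral>\<^sup>+y. ennreal (e y) * Gn (x - y) \<partial>lborel)" for x
  have wnm[measurable]: "wn \<in> borel_measurable borel"
    unfolding wn_def by measurable
  have wb: "w x \<le> wn x + ennreal N1 * ennreal F" for x
  proof -
    have "w x \<le> (\<integral>\<^sup>+y. ennreal (e y) * Gn (x - y) + ennreal (e y) * ennreal F \<partial>lborel)"
      unfolding w_def by (intro nn_integral_mono) (metis distrib_left mult_left_mono pwG zero_le)
    also have "\<dots> = wn x + (\<integral>\<^sup>+y. ennreal (e y) \<partial>lborel) * ennreal F"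
      unfolding wn_def by (simp add: nn_integral_add nn_integral_multc)
    finally show ?thesis using N1 by simp
  qed
  define A where "A = ennreal N1 * ennreal F"
  have "(\<integral>\<^sup>+x. indicator (ball 0 r) x * (w x)^2 \<partial>lborel)
      \<le> (\<integral>\<^sup>+x. 2 * (wn x)^2 + 2 * A^2 * indicator (ball 0 r) x \<partial>lborel)"
  proof (intro nn_integral_mono)
    fix x
    have "indicator (ball 0 r) x * (w x)^2 \<le> indicator (ball 0 r) x * (wn x + A)^2"
      using wb[of x] unfolding A_def by (intro mult_left_mono power_mono) auto
    also have "\<dots> \<le> indicator (ball 0 r) x * (2 * (wn x)^2 + 2 * A^2)"
      by (intro mult_left_mono sq_le_enn) auto
    also have "\<dots> \<le> 2 * (wn x)^2 + 2 * A^2 * indicator (ball 0 r) x"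
      by (cases "x \<in> ball 0 r") auto
    finally show "indicator (ball 0 r) x * (w x)^2 \<le> 2 * (wn x)^2 + 2 * A^2 * indicator (ball 0 r) x" .
  qed
  also have "\<dots> = 2 * (\<integral>\<^sup>+x. (wn x)^2 \<partial>lborel) + 2 * A^2 * emeasure lborel (ball (0::'a) r)"
    by (subst nn_integral_add) (auto simp: nn_integral_cmult nn_integral_cmult_indicator intro!: borel_measurable_times_ennreal borel_measurable_indicator)
  also have "\<dots> \<le> 2 * ((ennreal (K * \<delta> powr s))^2 * ennreal N2sq) + 2 * A^2 * ennreal V"
  proof (intro add_mono mult_left_mono)
    have "(\<integral>\<^sup>+x. (wn x)^2 \<partial>lborel) \<le> (\<integral>\<^sup>+z. Gn z \<partial>lborel)^2 * (\<integral>\<^sup>+ y. ennreal ((e y)^2) \<partial>lborel)"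
      unfolding wn_def by (rule schur) (auto simp: Gn_def e0 indicator_def)
    also have "\<dots> \<le> (ennreal (K * \<delta> powr s))^2 * ennreal N2sq"
    proof (intro mult_mono power_mono)
      show "(\<integral>\<^sup>+z. Gn z \<partial>lborel) \<le> ennreal (K * \<delta> powr s)"
        using riesz_ball[OF \<delta>0 less_imp_le[OF M0] b(1) b(2)[unfolded n_def]]
        unfolding Gn_def K_def b_def by simp
    qed (use N2 in auto)
    finally show "(\<integral>\<^sup>+x. (wn x)^2 \<partial>lborel) \<le> (ennreal (K * \<delta> powr s))^2 * ennreal N2sq" .
    show "emeasure lborel (ball (0::'a) r) \<le> ennreal V"
      using r unfolding V_def emeasure_ball[OF less_imp_le[OF r(1)]]
      by (intro ennreal_leI) (simp add: power_le_one mult_left_le)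
  qed auto
  also have "\<dots> = ennreal (2 * (K * \<delta> powr s)^2 * N2sq + 2 * (N1 * F)^2 * V)"
    unfolding A_def using K0 \<delta>0 N2 N1 F0 V0
    by (subst enn_combine[symmetric]) (auto simp: mult.assoc)
  also have "2 * (K * \<delta> powr s)^2 * N2sq + 2 * (N1 * F)^2 * V = (2 * K^2 + 2 * M^2 * V) * Q0^2"
  proof -
    have h1: "\<delta> powr s * N2 = Q0" and h2: "\<delta> powr (-b) * N1 = Q0"
      using alg_powr[OF N1(2) N2p(1), of n s] n1 unfolding \<delta>_def Q0_def b_def n_def by auto
    have e1: "(K * \<delta> powr s)^2 * N2sq = K^2 * Q0^2"
      unfolding N2p(2)[symmetric] h1[symmetric] by (simp add: power_mult_distrib)
    have e2: "(N1 * F)^2 = M^2 * Q0^2"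
      unfolding F_def h2[symmetric] by (simp add: power_mult_distrib algebra_simps)
    show ?thesis using e1 e2 by (simp add: algebra_simps)
  qed
  finally show ?thesis unfolding w_def G_def Q0_def N2_def n_def by simp
qed


lemma pos_ball:
  fixes f :: "'a::euclidean_space \<Rightarrow> real"
  assumes fm[measurable]: "f \<in> borel_measurable borel" and fp: "\<And>y. y \<in> ball 0 r \<Longrightarrow> 0 < f y" and r: "0 < r"
  shows "(\<integral>\<^sup>+ y. ennreal (indicator (ball 0 r) y * f y) \<partial>lborel) \<noteq> 0"
proof
  have [measurable]: "ball (0::'a) r \<in> sets borel" by simp
  assume "(\<integral>\<^sup>+ y. ennreal (indicator (ball 0 r) y * f y) \<partial>lborel) = 0"
  then have "AE y in lborel. ennreal (indicator (ball 0 r) y * f y) = 0"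
    by (subst (asm) nn_integral_0_iff_AE) auto
  then have "AE y in lborel. y \<notin> ball (0::'a) r"
  proof (rule AE_mp)
    show "AE y in lborel. ennreal (indicator (ball 0 r) y * f y) = 0 \<longrightarrow> y \<notin> ball (0::'a) r"
      using fp by (intro AE_I2) (fastforce simp: indicator_def split: if_splits)
  qed
  then have "emeasure lborel (ball (0::'a) r) = 0"
    by (subst (asm) AE_iff_measurable[of "ball 0 r"]) auto
  moreover have "emeasure lborel (ball (0::'a) r) > 0"
    using r by (simp add: emeasure_ball)
  ultimately show False by simp
qed

lemma prep:
  fixes u :: "'a::euclidean_space \<Rightarrow> real" and r :: real
  assumes r: "0 < r" and um: "set_borel_measurable lborel (ball 0 r) u"
    and ui: "set_integrable lborel (ball 0 r) (\<lambda>y. (exp (u y))\<^sup>2)"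
  shows "(\<lambda>y. indicator (ball 0 r) y * exp (u y)) \<in> borel_measurable borel"
    and "(\<integral>\<^sup>+y. ennreal (indicator (ball 0 r) y * exp (u y)) \<partial>lborel) = ennreal (LINT y:ball 0 r|lborel. exp (u y))"
    and "0 < (LINT y:ball 0 r|lborel. exp (u y))"
    and "(\<integral>\<^sup>+y. ennreal ((indicator (ball 0 r) y * exp (u y))^2) \<partial>lborel) = ennreal (LINT y:ball 0 r|lborel. (exp (u y))\<^sup>2)"
    and "0 < (LINT y:ball 0 r|lborel. (exp (u y))\<^sup>2)"
proof -
  define B where "B = ball (0::'a) r"
  define e where "e y = indicator B y * exp (u y)" for y
  have [measurable]: "B \<in> sets borel" by (simp add: B_def)
  have [measurable]: "ball (0::'a) r \<in> sets borel" by simp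
  have um'[measurable]: "(\<lambda>y. indicator B y *\<^sub>R u y) \<in> borel_measurable borel"
    using um unfolding set_borel_measurable_def B_def by simp
  have "e = (\<lambda>y. indicator B y * exp (indicator B y *\<^sub>R u y))"
    by (auto simp: e_def indicator_def fun_eq_iff)
  also have "\<dots> \<in> borel_measurable borel" using um' by measurable
  finally have em[measurable]: "e \<in> borel_measurable borel" .
  then show "(\<lambda>y. indicator (ball 0 r) y * exp (u y)) \<in> borel_measurable borel"
    unfolding e_def B_def .
  have sq: "(e y)^2 = indicator B y *\<^sub>R (exp (u y))^2" for y
    by (auto simp: e_def indicator_def)
  have int2: "integrable lborel (\<lambda>y. (e y)^2)"
    using ui unfolding set_integrable_def sq B_def by simp
  have nn2: "(\<integral>\<^sup>+y. ennreal ((e y)^2) \<partial>lborel) = ennreal (LINT y:B|lborel. (exp (u y))\<^sup>2)"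
    unfolding set_lebesgue_integral_def sq[symmetric]
    by (rule nn_integral_eq_integral[OF int2]) auto
  then show "(\<integral>\<^sup>+y. ennreal ((indicator (ball 0 r) y * exp (u y))^2) \<partial>lborel) = ennreal (LINT y:ball 0 r|lborel. (exp (u y))\<^sup>2)"
    unfolding e_def B_def .
  have p2: "(\<integral>\<^sup>+y. ennreal ((e y)^2) \<partial>lborel) \<noteq> 0"
  proof -
    have "(\<integral>\<^sup>+ y. ennreal (indicator (ball 0 r) y * (e y)^2) \<partial>lborel) \<noteq> 0"
    proof (rule pos_ball[OF _ _ r])
      show "(\<lambda>y. (e y)^2) \<in> borel_measurable borel" by measurable
    qed (auto simp: e_def B_def)
    moreover have "indicator (ball 0 r) y * (e y)^2 = (e y)^2" for y
      by (auto simp: e_def B_def indicator_def)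
    ultimately show ?thesis by simp
  qed
  have L2nn: "0 \<le> (LINT y:B|lborel. (exp (u y))\<^sup>2)"
    unfolding set_lebesgue_integral_def by (intro Bochner_Integration.integral_nonneg) (auto simp: indicator_def)
  show "0 < (LINT y:ball 0 r|lborel. (exp (u y))\<^sup>2)"
    using nn2 p2 L2nn unfolding B_def by (auto simp: order.order_iff_strict)
  have ee: "ennreal (e y) \<le> indicator B y + ennreal ((e y)^2)" for y
  proof (cases "y \<in> B")
    case True
    have "0 \<le> (exp (u y) - 1)^2" by simp
    then have "2 * exp (u y) \<le> 1 + (exp (u y))^2" by (simp add: power2_diff)
    then have "exp (u y) \<le> 1 + (exp (u y))^2" using exp_gt_zero[of "u y"] by linarith
    then have "ennreal (exp (u y)) \<le> ennreal (1 + (exp (u y))^2)" by (rule ennreal_leI)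
    then show ?thesis using True by (simp add: e_def)
  qed (simp add: e_def)
  have "(\<integral>\<^sup>+y. ennreal (e y) \<partial>lborel) \<le> (\<integral>\<^sup>+y. indicator B y + ennreal ((e y)^2) \<partial>lborel)"
    by (intro nn_integral_mono ee)
  also have "\<dots> = emeasure lborel B + ennreal (LINT y:B|lborel. (exp (u y))\<^sup>2)"
    by (subst nn_integral_add) (auto simp: B_def nn2[unfolded B_def])
  also have "\<dots> < \<infinity>" unfolding B_def using r by (simp add: emeasure_ball)
  finally have fin: "(\<integral>\<^sup>+y. ennreal (e y) \<partial>lborel) < \<infinity>" .
  have L1: "(LINT y:B|lborel. exp (u y)) = enn2real (\<integral>\<^sup>+y. ennreal (e y) \<partial>lborel)"
  proof -
    have "(LINT y:B|lborel. exp (u y)) = integral\<^sup>L lborel e"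
      unfolding set_lebesgue_integral_def e_def by simp
    also have "\<dots> = enn2real (\<integral>\<^sup>+y. ennreal (e y) \<partial>lborel)"
      by (rule integral_eq_nn_integral) (auto simp: e_def)
    finally show ?thesis .
  qed
  have nn1: "(\<integral>\<^sup>+y. ennreal (e y) \<partial>lborel) = ennreal (LINT y:B|lborel. exp (u y))"
    unfolding L1 using fin by (simp add: ennreal_enn2real_if less_top)
  then show "(\<integral>\<^sup>+y. ennreal (indicator (ball 0 r) y * exp (u y)) \<partial>lborel) = ennreal (LINT y:ball 0 r|lborel. exp (u y))"
    unfolding e_def B_def .
  have p1: "(\<integral>\<^sup>+y. ennreal (e y) \<partial>lborel) \<noteq> 0"
  proof -
    have "(\<integral>\<^sup>+ y. ennreal (indicator (ball 0 r) y * e y) \<partial>lborel) \<noteq> 0"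
    proof (rule pos_ball[OF _ _ r])
      show "e \<in> borel_measurable borel" by measurable
    qed (auto simp: e_def B_def)
    moreover have "indicator (ball 0 r) y * e y = e y" for y
      by (auto simp: e_def B_def indicator_def)
    ultimately show ?thesis by simp
  qed
  have L1nn: "0 \<le> (LINT y:B|lborel. exp (u y))"
    unfolding set_lebesgue_integral_def by (intro Bochner_Integration.integral_nonneg) (auto simp: indicator_def)
  show "0 < (LINT y:ball 0 r|lborel. exp (u y))"
    using nn1 p1 L1nn unfolding B_def by (auto simp: order.order_iff_strict)
qed


lemma enn_sqrt_bound:
  fixes a :: ennreal and X :: real
  assumes "a \<le> ennreal (X^2)" "0 \<le> X"
  shows "a < \<infinity>" "sqrt (enn2real a) \<le> X"
proof -
  show "a < \<infinity>" using assms(1) by (metis ennreal_less_top infinity_ennreal_def le_less_trans)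
  have "enn2real a \<le> X^2" by (rule enn2real_leI) (use assms in auto)
  then have "sqrt (enn2real a) \<le> sqrt (X^2)" by (rule real_sqrt_le_mono)
  then show "sqrt (enn2real a) \<le> X" using assms(2) by simp
qed

lemma Tint:
  fixes s :: real assumes "0 < s" "s < 1"
  shows "(\<integral>\<^sup>+t. indicator {0..1} t * ennreal (t powr (1 - 2 * s)) \<partial>lborel) = ennreal (1 / (2 - 2 * s))"
proof -
  have "((\<lambda>t. t powr (1 - 2 * s)) has_integral (1 powr (1 - 2 * s + 1) / (1 - 2 * s + 1))) {0..1}"
    by (rule has_integral_powr_from_0) (use assms in auto)
  then have "integral\<^sup>N lborel (\<lambda>t. ennreal (indicator {0..1} t * t powr (1 - 2 * s))) = ennreal (1 powr (1 - 2 * s + 1) / (1 - 2 * s + 1))"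
    by (intro nn_integral_has_integral_lebesgue) auto
  moreover have "(\<lambda>t. ennreal (indicator {0..1} t * t powr (1 - 2 * s))) = (\<lambda>t. indicator {0..1} t * ennreal (t powr (1 - 2 * s)))"
    by (auto simp: indicator_def fun_eq_iff)
  ultimately show ?thesis by (simp add: algebra_simps)
qed

theorem lemma3p2:
  fixes s c :: real
  assumes "0 < s" "s < 1" "0 < c"
  shows "\<exists>\<gamma> C. 0 < \<gamma> \<and> \<gamma> < 1 \<and> 0 < C \<and>
    (\<forall>r (u :: 'a::euclidean_space \<Rightarrow> real).
       0 < r \<and> r \<le> 1 \<and> set_borel_measurable lborel (ball 0 r) u \<and>
       set_integrable lborel (ball 0 r) (\<lambda>y. (exp (u y))\<^sup>2) \<longrightarrow>
       (let A = (\<integral>\<^sup>+ p \<in> half_ball r. ennreal ((snd p) powr (1 - 2 * s)) * (vbar c s r u p)\<^sup>2 \<partial>lborel);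
            B = (\<integral>\<^sup>+ x \<in> ball 0 r. (vbar c s r u (x, 0))\<^sup>2 \<partial>lborel)
        in A < \<infinity> \<and> B < \<infinity> \<and>
           sqrt (enn2real A) + sqrt (enn2real B)
             \<le> C * (LINT y:ball 0 r|lborel. exp (u y)) powr \<gamma>
                 * (sqrt (LINT y:ball 0 r|lborel. (exp (u y))\<^sup>2)) powr (1 - \<gamma>)))"
proof -
  define n where "n = real DIM('a)"
  define b where "b = n - s"
  define M where "M = 5 * 2 powr n"
  define V where "V = unit_ball_vol DIM('a)"
  define K where "K = M * unit_ball_vol DIM('a) * 2 powr b / (1 - 2 powr (b - DIM('a)))"
  define Kt where "Kt = sqrt (2 * K^2 + 2 * M^2 * V)"
  define T where "T = 1 / (2 - 2 * s)"
  define C where "C = c * Kt * (sqrt T + 1)"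
  define \<gamma> where "\<gamma> = s / n"
  have n1: "1 \<le> n" unfolding n_def by (simp add: DIM_positive Suc_le_eq)
  have b: "0 < b" "b < n" using assms n1 unfolding b_def by linarith+
  have M0: "0 < M" unfolding M_def by simp
  have V0: "0 < V" unfolding V_def by simp
  have K0: "0 \<le> K"
  proof -
    have "(2::real) powr (b - n) < 2 powr 0" using b by (intro powr_less_mono) auto
    then show ?thesis unfolding K_def n_def using M0 by (simp add: n_def)
  qed
  have Kt0: "0 < Kt" unfolding Kt_def using M0 V0 K0
    by (intro real_sqrt_gt_zero add_nonneg_pos) auto
  have Kt2: "Kt^2 = 2 * K^2 + 2 * M^2 * V" unfolding Kt_def using M0 V0 by simp
  have T0: "0 < T" unfolding T_def using assms by simp
  have C0: "0 < C" unfolding C_def using assms Kt0 T0 by (intro mult_pos_pos add_nonneg_pos) auto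
  have g: "0 < \<gamma>" "\<gamma> < 1" unfolding \<gamma>_def using assms n1 by auto
  show ?thesis
  proof (rule exI[of _ \<gamma>], rule exI[of _ C], intro conjI allI impI g C0)
    fix r and u :: "'a \<Rightarrow> real"
    assume H: "0 < r \<and> r \<le> 1 \<and> set_borel_measurable lborel (ball 0 r) u \<and>
       set_integrable lborel (ball 0 r) (\<lambda>y. (exp (u y))\<^sup>2)"
    then have r: "0 < r" "r \<le> 1" and um: "set_borel_measurable lborel (ball 0 r) u"
      and ui: "set_integrable lborel (ball 0 r) (\<lambda>y. (exp (u y))\<^sup>2)" by auto
    define e where "e y = indicator (ball 0 r) y * exp (u y)" for y
    define N1 where "N1 = (LINT y:ball 0 r|lborel. exp (u y))"
    define N2sq where "N2sq = (LINT y:ball 0 r|lborel. (exp (u y))\<^sup>2)"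
    note P = prep[OF r(1) um ui, folded e_def N1_def N2sq_def]
    have em[measurable]: "e \<in> borel_measurable borel" using P(1) unfolding e_def .
    have [measurable]: "ball (0::'a) r \<in> sets borel" by simp
    define Q0 where "Q0 = N1 powr \<gamma> * (sqrt N2sq) powr (1 - \<gamma>)"
    have Q0: "0 \<le> Q0" unfolding Q0_def by simp
    define w where "w x = (\<integral>\<^sup>+y. ennreal (e y) * ennreal (M * norm (x - y) powr (-b)) \<partial>lborel)" for x
    have pm[measurable]: "(\<lambda>x::'a. M * norm x powr (-b)) \<in> borel_measurable borel"
      by (intro borel_measurable_times powr_real_measurable borel_measurable_norm borel_measurable_const measurable_ident_sets)
    have wm[measurable]: "w \<in> borel_measurable borel" unfolding w_def by measurable
    have J: "(\<integral>\<^sup>+x. indicator (ball 0 r) x * (w x)^2 \<partial>lborel) \<le> ennreal (Kt^2 * Q0^2)"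
      unfolding w_def Kt2 Q0_def \<gamma>_def n_def
      by (rule main_est[OF _ _ _ _ em _ r assms(1,2) P(2,3) P(4,5)])
         (auto simp: b_def n_def M_def V_def K_def e_def)
    have vb: "vbar c s r u (x, t) \<le> ennreal c * w x" if x: "x \<in> ball 0 r" and t: "0 \<le> t" "t \<le> 1" for x t
    proof -
      have pt: "ennreal (exp (u y) / ((norm (x - y))\<^sup>2 + t\<^sup>2) powr ((n - 2 * s) / 2)) * indicator (ball 0 r) y
          \<le> ennreal (e y) * ennreal (M * norm (x - y) powr (-b))" if yx: "y \<noteq> x" for y
      proof (cases "y \<in> ball 0 r")
        case True
        define d where "d = norm (x - y)"
        have d0: "0 < d" using yx by (simp add: d_def)
        have "d \<le> norm x + norm y" unfolding d_def by (rule norm_triangle_ineq4)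
        also have "\<dots> < 2" using x True r by simp
        finally have d2: "d < 2" .
        have kb: "1 / (d^2 + t^2) powr ((n - 2 * s)/2) \<le> M * d powr (-b)"
          using kern_bound[OF d0 d2 t n1 assms(1,2)] unfolding M_def b_def .
        have "exp (u y) / (d^2 + t^2) powr ((n - 2 * s)/2) = exp (u y) * (1 / (d^2 + t^2) powr ((n - 2 * s)/2))"
          by simp
        also have "\<dots> \<le> exp (u y) * (M * d powr (-b))"
          by (rule mult_left_mono[OF kb]) simp
        finally have "exp (u y) / (d^2 + t^2) powr ((n - 2 * s)/2) \<le> e y * (M * d powr (-b))"
          using True by (simp add: e_def)
        then have "ennreal (exp (u y) / (d^2 + t^2) powr ((n - 2 * s)/2)) \<le> ennreal (e y * (M * d powr (-b)))"
          by (rule ennreal_leI)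
        also have "\<dots> = ennreal (e y) * ennreal (M * d powr (-b))"
          by (rule ennreal_mult) (use M0 in \<open>auto simp: e_def\<close>)
        finally show ?thesis using True by (simp add: d_def)
      qed simp
      have "vbar c s r u (x, t) = ennreal c * (\<integral>\<^sup>+ y. ennreal (exp (u y) / ((norm (x - y))\<^sup>2 + t\<^sup>2) powr ((n - 2 * s) / 2)) * indicator (ball 0 r) y \<partial>lborel)"
        by (simp add: vbar_def n_def)
      also have "\<dots> \<le> ennreal c * w x"
        unfolding w_def
      proof (intro mult_left_mono nn_integral_mono_AE)
        show "AE y in lborel. ennreal (exp (u y) / ((norm (x - y))\<^sup>2 + t\<^sup>2) powr ((n - 2 * s) / 2)) * indicator (ball 0 r) y
          \<le> ennreal (e y) * ennreal (M * norm (x - y) powr (-b))"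
          using AE_lborel_singleton[of x]
        proof (rule AE_mp)
          show "AE y in lborel. y \<noteq> x \<longrightarrow> ennreal (exp (u y) / ((norm (x - y))\<^sup>2 + t\<^sup>2) powr ((n - 2 * s) / 2)) * indicator (ball 0 r) y
            \<le> ennreal (e y) * ennreal (M * norm (x - y) powr (-b))"
            using pt by (intro AE_I2 impI) auto
        qed
      qed simp
      finally show ?thesis .
    qed
    define Aint where "Aint = (\<integral>\<^sup>+ p \<in> half_ball r. ennreal ((snd p) powr (1 - 2 * s)) * (vbar c s r u p)\<^sup>2 \<partial>lborel)"
    define Bint where "Bint = (\<integral>\<^sup>+ x \<in> ball 0 r. (vbar c s r u (x, 0))\<^sup>2 \<partial>lborel)"
    define J0 where "J0 = (\<integral>\<^sup>+x. indicator (ball 0 r) x * (w x)^2 \<partial>lborel)"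
    have J0m[measurable]: "(\<lambda>x. indicator (ball 0 r) x * (w x)^2) \<in> borel_measurable borel"
      by measurable
    have enn1: "ennreal c ^ 2 * ennreal (Kt^2 * Q0^2) = ennreal ((c * Kt * Q0)^2)"
    proof -
      have "(c * Kt * Q0)^2 = c^2 * (Kt^2 * Q0^2)" by (simp add: power_mult_distrib)
      then show ?thesis using assms
        by (simp add: ennreal_mult ennreal_power)
    qed
    have enn2: "ennreal c ^ 2 * ennreal T * ennreal (Kt^2 * Q0^2) = ennreal ((c * Kt * sqrt T * Q0)^2)"
    proof -
      have "(c * Kt * sqrt T * Q0)^2 = c^2 * T * (Kt^2 * Q0^2)" using T0 by (simp add: power_mult_distrib)
      then show ?thesis using assms T0
        by (simp add: ennreal_mult ennreal_power)
    qed
    have Bb: "Bint \<le> ennreal ((c * Kt * Q0)^2)"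
    proof -
      have "Bint \<le> (\<integral>\<^sup>+x. ennreal c ^ 2 * (indicator (ball 0 r) x * (w x)^2) \<partial>lborel)"
        unfolding Bint_def
      proof (intro nn_integral_mono)
        fix x
        show "(vbar c s r u (x, 0))\<^sup>2 * indicator (ball 0 r) x \<le> ennreal c ^ 2 * (indicator (ball 0 r) x * (w x)^2)"
        proof (cases "x \<in> ball 0 r")
          case True
          have "(vbar c s r u (x, 0))\<^sup>2 \<le> (ennreal c * w x)^2"
            by (intro power_mono vb[OF True]) auto
          then show ?thesis using True by (simp add: power_mult_distrib)
        qed simp
      qed
      also have "\<dots> = ennreal c ^ 2 * J0" unfolding J0_def by (rule nn_integral_cmult) simp
      also have "\<dots> \<le> ennreal c ^ 2 * ennreal (Kt^2 * Q0^2)"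
        unfolding J0_def by (rule mult_left_mono[OF J]) simp
      finally show ?thesis unfolding enn1 .
    qed
    have Ab: "Aint \<le> ennreal ((c * Kt * sqrt T * Q0)^2)"
    proof -
      define Hf where "Hf p = ennreal c ^ 2 * (indicator (ball 0 r) (fst p) * (w (fst p))^2)
          * (indicator {0..1} (snd p) * ennreal (snd p powr (1 - 2 * s)))" for p :: "'a \<times> real"
      have Hfm: "Hf \<in> borel_measurable (lborel \<Otimes>\<^sub>M lborel)"
        unfolding Hf_def by measurable
      have "Aint \<le> (\<integral>\<^sup>+p. Hf p \<partial>lborel)"
        unfolding Aint_def
      proof (intro nn_integral_mono)
        fix p :: "'a \<times> real"
        obtain x t where p: "p = (x, t)" by fastforce
        show "ennreal (snd p powr (1 - 2 * s)) * (vbar c s r u p)\<^sup>2 * indicator (half_ball r) p \<le> Hf p"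
        proof (cases "p \<in> half_ball r")
          case True
          then have nr: "norm (x, t) < r" "0 \<le> t" by (auto simp: half_ball_def p)
          have x: "x \<in> ball 0 r" using norm_fst_le[of x t] nr by simp
          have t1: "t \<le> 1" using norm_snd_le[of t x] nr r by simp
          have "(vbar c s r u (x, t))\<^sup>2 \<le> (ennreal c * w x)^2"
            by (intro power_mono vb[OF x nr(2) t1]) auto
          then have "ennreal (t powr (1 - 2 * s)) * (vbar c s r u (x, t))\<^sup>2
              \<le> ennreal (t powr (1 - 2 * s)) * (ennreal c * w x)^2"
            by (rule mult_left_mono) simp
          then show ?thesis using True x nr t1 unfolding Hf_def p
            by (simp add: power_mult_distrib ac_simps)
        qed simp
      qed
      also have "(\<integral>\<^sup>+p. Hf p \<partial>lborel) = (\<integral>\<^sup>+p. Hf p \<partial>(lborel \<Otimes>\<^sub>M lborel))"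
        by (simp add: lborel_prod)
      also have "\<dots> = (\<integral>\<^sup>+x. (\<integral>\<^sup>+t. Hf (x, t) \<partial>lborel) \<partial>lborel)"
        by (rule lborel.nn_integral_fst[symmetric, OF Hfm])
      also have "\<dots> = (\<integral>\<^sup>+x. (ennreal c ^ 2 * ennreal T) * (indicator (ball 0 r) x * (w x)^2) \<partial>lborel)"
      proof (intro nn_integral_cong)
        fix x
        have "(\<integral>\<^sup>+t. Hf (x, t) \<partial>lborel) = ennreal c ^ 2 * (indicator (ball 0 r) x * (w x)^2)
            * (\<integral>\<^sup>+t. indicator {0..1} t * ennreal (t powr (1 - 2 * s)) \<partial>lborel)"
          unfolding Hf_def by (simp add: nn_integral_cmult)
        also have "\<dots> = (ennreal c ^ 2 * ennreal T) * (indicator (ball 0 r) x * (w x)^2)"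
          unfolding Tint[OF assms(1,2)] T_def by (simp add: ac_simps)
        finally show "(\<integral>\<^sup>+t. Hf (x, t) \<partial>lborel) = (ennreal c ^ 2 * ennreal T) * (indicator (ball 0 r) x * (w x)^2)" .
      qed
      also have "\<dots> = (ennreal c ^ 2 * ennreal T) * J0" unfolding J0_def by (rule nn_integral_cmult) simp
      also have "\<dots> \<le> (ennreal c ^ 2 * ennreal T) * ennreal (Kt^2 * Q0^2)"
        unfolding J0_def by (rule mult_left_mono[OF J]) simp
      finally show ?thesis unfolding enn2 .
    qed
    have XA: "0 \<le> c * Kt * sqrt T * Q0" "0 \<le> c * Kt * Q0" using assms Kt0 T0 Q0 by auto
    note SA = enn_sqrt_bound[OF Ab XA(1)] and SB = enn_sqrt_bound[OF Bb XA(2)]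
    have "sqrt (enn2real Aint) + sqrt (enn2real Bint) \<le> c * Kt * sqrt T * Q0 + c * Kt * Q0"
      using SA(2) SB(2) by linarith
    also have "\<dots> = C * N1 powr \<gamma> * (sqrt N2sq) powr (1 - \<gamma>)"
      unfolding C_def Q0_def by (simp add: algebra_simps)
    finally have "Aint < \<infinity> \<and> Bint < \<infinity> \<and>
           sqrt (enn2real Aint) + sqrt (enn2real Bint)
             \<le> C * N1 powr \<gamma> * (sqrt N2sq) powr (1 - \<gamma>)"
      using SA(1) SB(1) by simp
    then show "let A = (\<integral>\<^sup>+ p \<in> half_ball r. ennreal ((snd p) powr (1 - 2 * s)) * (vbar c s r u p)\<^sup>2 \<partial>lborel);
            B = (\<integral>\<^sup>+ x \<in> ball 0 r. (vbar c s r u (x, 0))\<^sup>2 \<partial>lborel)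
        in A < \<infinity> \<and> B < \<infinity> \<and>
           sqrt (enn2real A) + sqrt (enn2real B)
             \<le> C * (LINT y:ball 0 r|lborel. exp (u y)) powr \<gamma>
                 * (sqrt (LINT y:ball 0 r|lborel. (exp (u y))\<^sup>2)) powr (1 - \<gamma>)"
      unfolding Aint_def Bint_def N1_def N2sq_def by simp
  qed
qed


end
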